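(* Let $\Lambda>0$ and let $u$ be a nonzero caloric polynomial on $\mathbb R^n\times(-\infty,0]$ with $N(1)\le\Lambda$. For every $\epsilon>0$ there exists $\delta=\delta(\epsilon,\Lambda)>0$ such that, for any integer $d$, if $N(1)\le d-\epsilon$ then $N(\delta)\le d-1+\epsilon$.
   Context: A caloric polynomial is a polynomial in $(x,t)$ solving $\partial_tu=\Delta u$. For $r>0$, $N(r)=\dfrac{2r^2\int_{\mathbb R^n}|\nabla u(x,-r^2)|^2G(x,-r^2)\,dx}{\int_{\mathbb R^n}u(x,-r^2)^2G(x,-r^2)\,dx}$, where $G(x,t)=(4\pi(-t))^{-n/2}e^{-|x|^2/(4(-t))}$ for $t<0$. *)

theory Defs
  imports "HOL-Analysis.Analysis"
begin

inductive_set poly_fun :: "(real^'n \<Rightarrow> real \<Rightarrow> real) set" where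
  pf_const: "(\<lambda>x t. c) \<in> poly_fun"
| pf_coord: "(\<lambda>x t. x $ i) \<in> poly_fun"
| pf_time: "(\<lambda>x t. t) \<in> poly_fun"
| pf_add: "p \<in> poly_fun \<Longrightarrow> q \<in> poly_fun \<Longrightarrow> (\<lambda>x t. p x t + q x t) \<in> poly_fun"
| pf_mult: "p \<in> poly_fun \<Longrightarrow> q \<in> poly_fun \<Longrightarrow> (\<lambda>x t. p x t * q x t) \<in> poly_fun"

definition pdx :: "(real^'n \<Rightarrow> real \<Rightarrow> real) \<Rightarrow> 'n \<Rightarrow> real^'n \<Rightarrow> real \<Rightarrow> real" where
  "pdx u i x t = deriv (\<lambda>s. u (x + s *\<^sub>R axis i 1) t) 0"

definition pdt :: "(real^'n \<Rightarrow> real \<Rightarrow> real) \<Rightarrow> real^'n \<Rightarrow> real \<Rightarrow> real" where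
  "pdt u x t = deriv (\<lambda>s. u x s) t"

definition laplacian :: "(real^'n \<Rightarrow> real \<Rightarrow> real) \<Rightarrow> real^'n \<Rightarrow> real \<Rightarrow> real" where
  "laplacian u x t = (\<Sum>i\<in>UNIV. pdx (pdx u i) i x t)"

definition grad_sq :: "(real^'n \<Rightarrow> real \<Rightarrow> real) \<Rightarrow> real^'n \<Rightarrow> real \<Rightarrow> real" where
  "grad_sq u x t = (\<Sum>i\<in>UNIV. (pdx u i x t)\<^sup>2)"

definition caloric_poly :: "(real^'n \<Rightarrow> real \<Rightarrow> real) \<Rightarrow> bool" where
  "caloric_poly u \<longleftrightarrow> u \<in> poly_fun \<and> (\<forall>x t. pdt u x t = laplacian u x t)"

definition heatG :: "real^'n \<Rightarrow> real \<Rightarrow> real" where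
  "heatG x t = (4 * pi * (- t)) powr (- real CARD('n) / 2) * exp (- (norm x)\<^sup>2 / (4 * (- t)))"

definition freq :: "(real^'n \<Rightarrow> real \<Rightarrow> real) \<Rightarrow> real \<Rightarrow> real" where
  "freq u r = 2 * r\<^sup>2 * (LINT x|lborel. grad_sq u x (- r\<^sup>2) * heatG x (- r\<^sup>2))
              / (LINT x|lborel. (u x (- r\<^sup>2))\<^sup>2 * heatG x (- r\<^sup>2))"

end

theory Submission
  imports Defs "HOL-Probability.Distributions"
begin

lemma axis_nth: "axis i (1::real) $ j = (if j = i then 1 else 0)"
  by (simp add: axis_def)

lemma DERIV_eqv: "(f has_real_derivative a) F \<Longrightarrow> a = b \<Longrightarrow> (f has_real_derivative b) F"
  by simp

definition chainp :: "(real^'n \<Rightarrow> real \<Rightarrow> real) \<Rightarrow> bool" where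
  "chainp r \<longleftrightarrow> (\<forall>X X' T T' s. (\<forall>j. ((\<lambda>s. X s $ j) has_real_derivative X' $ j) (at s)) \<longrightarrow>
     (T has_real_derivative T') (at s) \<longrightarrow>
     ((\<lambda>s. r (X s) (T s)) has_real_derivative
        ((\<Sum>i\<in>UNIV. X' $ i * pdx r i (X s) (T s)) + T' * pdt r (X s) (T s))) (at s))"

lemma chainp_lx:
  assumes "chainp r"
  shows "((\<lambda>s. r (x + s *\<^sub>R axis i 1) t) has_real_derivative pdx r i x t) (at 0)"
proof -
  have pr: "((\<lambda>s. (x + s *\<^sub>R axis i 1) $ j) has_real_derivative axis i 1 $ j) (at 0)" for j
    by (auto simp: axis_nth intro!: derivative_eq_intros)
  have sm: "(\<Sum>k\<in>UNIV. axis i 1 $ k * pdx r k x t) = pdx r i x t"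
  proof -
    have "axis i 1 $ k * pdx r k x t = (if k = i then pdx r k x t else 0)" for k
      by (simp add: axis_nth)
    then show ?thesis by simp
  qed
  have "((\<lambda>s. r (x + s *\<^sub>R axis i 1) t) has_real_derivative
     (\<Sum>k\<in>UNIV. axis i 1 $ k * pdx r k x t) + 0 * pdt r x t) (at 0)"
  proof -
    have c: "((\<lambda>_. t) has_real_derivative 0) (at 0)" by simp
    show ?thesis using assms[unfolded chainp_def, rule_format, where X="\<lambda>s. x + s *\<^sub>R axis i 1" and X'="axis i 1" and T="\<lambda>_. t" and T'=0 and s=0, OF pr c] by simp
  qed
  then show ?thesis unfolding sm by simp
qed

lemma chainp_lt:
  fixes x :: "real^'n"
  assumes "chainp r"
  shows "((\<lambda>s. r x s) has_real_derivative pdt r x t) (at t)"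
proof -
  have pr: "((\<lambda>s. (\<lambda>s. x) s $ j) has_real_derivative (0::real^'n) $ j) (at t)" for j
    by (simp add: DERIV_const)
  have "((\<lambda>s. r x s) has_real_derivative
     (\<Sum>k\<in>UNIV. (0::real^'n) $ k * pdx r k x t) + 1 * pdt r x t) (at t)"
  proof -
    have c: "((\<lambda>s. s) has_real_derivative 1) (at t)" by simp
    show ?thesis using assms[unfolded chainp_def, rule_format, where X="\<lambda>s. x" and X'=0 and T="\<lambda>s. s" and T'=1 and s=t, OF pr c] by simp
  qed
  then show ?thesis by simp
qed

lemma mk_chainp:
  assumes "\<And>X X' T T' s. (\<And>j. ((\<lambda>s. X s $ j) has_real_derivative X' $ j) (at s)) \<Longrightarrow>
     (T has_real_derivative T') (at s) \<Longrightarrow>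
     ((\<lambda>s. r (X s) (T s)) has_real_derivative
        ((\<Sum>i\<in>UNIV. X' $ i * pdx r i (X s) (T s)) + T' * pdt r (X s) (T s))) (at s)"
  shows "chainp r"
  unfolding chainp_def using assms by blast

lemma pf_chain:
  assumes "p \<in> poly_fun"
  shows "\<And>X X' T T' s. (\<And>j. ((\<lambda>s. X s $ j) has_real_derivative X' $ j) (at s)) \<Longrightarrow>
     (T has_real_derivative T') (at s) \<Longrightarrow>
     ((\<lambda>s. p (X s) (T s)) has_real_derivative
        ((\<Sum>i\<in>UNIV. X' $ i * pdx p i (X s) (T s)) + T' * pdt p (X s) (T s))) (at s)"
  using assms
proof (induction p)
  case (pf_const c)
  have a: "pdx (\<lambda>x t. c) i x t = 0" for i x t by (simp add: pdx_def)
  have b: "pdt (\<lambda>x t. c) x t = 0" for x t by (simp add: pdt_def)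
  show ?case unfolding a b by simp
next
  case (pf_coord j)
  have d: "pdx (\<lambda>x t. x $ j) i x t = (if j = i then 1 else 0)" for i x t
  proof -
    have "((\<lambda>s. (x + s *\<^sub>R axis i 1) $ j) has_real_derivative (if j = i then 1 else 0)) (at 0)"
      by (auto simp: axis_nth intro!: derivative_eq_intros)
    then show ?thesis unfolding pdx_def by (rule DERIV_imp_deriv)
  qed
  have "pdt (\<lambda>x t. x $ j) x t = 0" for x t by (simp add: pdt_def)
  then show ?case using pf_coord(1)[of j] by (simp add: d if_distrib cong: if_cong)
next
  case pf_time
  have a: "pdx (\<lambda>x t. t) i x t = 0" for i x t by (simp add: pdx_def)
  have b: "pdt (\<lambda>x t. t) x t = 1" for x t by (simp add: pdt_def)
  show ?case unfolding a b using pf_time by simp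
next
  case (pf_add p q)
  have dx: "pdx (\<lambda>x t. p x t + q x t) i x t = pdx p i x t + pdx q i x t" for i x t
    unfolding pdx_def[of "\<lambda>x t. p x t + q x t"]
    by (rule DERIV_imp_deriv, rule DERIV_add, rule chainp_lx[OF pf_add.IH(1)[THEN mk_chainp]], assumption+,
        rule chainp_lx[OF pf_add.IH(2)[THEN mk_chainp]], assumption+)
  have dt: "pdt (\<lambda>x t. p x t + q x t) x t = pdt p x t + pdt q x t" for x t
    unfolding pdt_def[of "\<lambda>x t. p x t + q x t"]
    by (rule DERIV_imp_deriv, rule DERIV_add, rule chainp_lt[OF pf_add.IH(1)[THEN mk_chainp]], assumption+,
        rule chainp_lt[OF pf_add.IH(2)[THEN mk_chainp]], assumption+)
  have D: "((\<lambda>s. p (X s) (T s) + q (X s) (T s)) has_real_derivative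
     ((\<Sum>i\<in>UNIV. X' $ i * pdx p i (X s) (T s)) + T' * pdt p (X s) (T s)) +
     ((\<Sum>i\<in>UNIV. X' $ i * pdx q i (X s) (T s)) + T' * pdt q (X s) (T s))) (at s)"
    by (rule DERIV_add[OF pf_add.IH(1)[OF pf_add.prems] pf_add.IH(2)[OF pf_add.prems]])
  have E: "((\<Sum>i\<in>UNIV. X' $ i * pdx p i (X s) (T s)) + T' * pdt p (X s) (T s)) +
     ((\<Sum>i\<in>UNIV. X' $ i * pdx q i (X s) (T s)) + T' * pdt q (X s) (T s)) =
     (\<Sum>i\<in>UNIV. X' $ i * (pdx p i (X s) (T s) + pdx q i (X s) (T s))) + T' * (pdt p (X s) (T s) + pdt q (X s) (T s))"
    by (simp add: distrib_left sum.distrib)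
  show ?case
    unfolding dx dt using D unfolding E .
next
  case (pf_mult p q)
  have dx: "pdx (\<lambda>x t. p x t * q x t) i x t = pdx p i x t * q x t + p x t * pdx q i x t" for i x t
  proof -
    have "((\<lambda>s. p (x + s *\<^sub>R axis i 1) t * q (x + s *\<^sub>R axis i 1) t) has_real_derivative
       pdx p i x t * q x t + p x t * pdx q i x t) (at 0)"
    proof (rule DERIV_eqv[OF DERIV_mult])
      show "((\<lambda>s. p (x + s *\<^sub>R axis i 1) t) has_real_derivative pdx p i x t) (at 0)"
        by (rule chainp_lx[OF pf_mult.IH(1)[THEN mk_chainp]])
      show "((\<lambda>s. q (x + s *\<^sub>R axis i 1) t) has_real_derivative pdx q i x t) (at 0)"
        by (rule chainp_lx[OF pf_mult.IH(2)[THEN mk_chainp]])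
    qed simp
    then show ?thesis unfolding pdx_def[of "\<lambda>x t. p x t * q x t"] by (rule DERIV_imp_deriv)
  qed
  have dt: "pdt (\<lambda>x t. p x t * q x t) x t = pdt p x t * q x t + p x t * pdt q x t" for x t
  proof -
    have "((\<lambda>s. p x s * q x s) has_real_derivative pdt p x t * q x t + p x t * pdt q x t) (at t)"
    proof (rule DERIV_eqv[OF DERIV_mult])
      show "((\<lambda>s. p x s) has_real_derivative pdt p x t) (at t)"
        by (rule chainp_lt[OF pf_mult.IH(1)[THEN mk_chainp]])
      show "((\<lambda>s. q x s) has_real_derivative pdt q x t) (at t)"
        by (rule chainp_lt[OF pf_mult.IH(2)[THEN mk_chainp]])
    qed simp
    then show ?thesis unfolding pdt_def[of "\<lambda>x t. p x t * q x t"] by (rule DERIV_imp_deriv)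
  qed
  have D: "((\<lambda>s. p (X s) (T s) * q (X s) (T s)) has_real_derivative
     ((\<Sum>i\<in>UNIV. X' $ i * pdx p i (X s) (T s)) + T' * pdt p (X s) (T s)) * q (X s) (T s) +
     p (X s) (T s) * ((\<Sum>i\<in>UNIV. X' $ i * pdx q i (X s) (T s)) + T' * pdt q (X s) (T s))) (at s)"
    by (rule DERIV_eqv[OF DERIV_mult[OF pf_mult.IH(1)[OF pf_mult.prems] pf_mult.IH(2)[OF pf_mult.prems]]]) simp
  have E: "((\<Sum>i\<in>UNIV. X' $ i * pdx p i (X s) (T s)) + T' * pdt p (X s) (T s)) * q (X s) (T s) +
     p (X s) (T s) * ((\<Sum>i\<in>UNIV. X' $ i * pdx q i (X s) (T s)) + T' * pdt q (X s) (T s)) =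
     (\<Sum>i\<in>UNIV. X' $ i * (pdx p i (X s) (T s) * q (X s) (T s) + p (X s) (T s) * pdx q i (X s) (T s))) +
     T' * (pdt p (X s) (T s) * q (X s) (T s) + p (X s) (T s) * pdt q (X s) (T s))"
    by (simp add: distrib_left distrib_right sum.distrib sum_distrib_left sum_distrib_right mult_ac)
  show ?case
    unfolding dx dt using D unfolding E .
qed

lemma pf_chainp: "p \<in> poly_fun \<Longrightarrow> chainp p"
  by (rule mk_chainp, rule pf_chain)

lemma pf_scale: "p \<in> poly_fun \<Longrightarrow> (\<lambda>x t. c * p x t) \<in> poly_fun"
  using pf_mult[OF pf_const] by blast

lemma pf_sum: "finite K \<Longrightarrow> (\<forall>k\<in>K. Q k \<in> poly_fun) \<Longrightarrow> (\<lambda>x t. \<Sum>k\<in>K. Q k x t) \<in> poly_fun"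
proof (induction K rule: finite_induct)
  case empty
  then show ?case using pf_const[of 0] by simp
next
  case (insert k K)
  then show ?case using pf_add[of "Q k" "\<lambda>x t. \<Sum>k\<in>K. Q k x t"] by simp
qed

definition rep :: "(real^'n \<Rightarrow> real \<Rightarrow> real) \<Rightarrow> nat \<Rightarrow> (nat \<Rightarrow> real^'n \<Rightarrow> real \<Rightarrow> real) \<Rightarrow> bool" where
  "rep u D Q \<longleftrightarrow> (\<forall>k. Q k \<in> poly_fun) \<and> (\<forall>k>D. \<forall>y t. Q k y t = 0) \<and>
     (\<forall>a y t. u (a *\<^sub>R y) (-(a\<^sup>2)) = (\<Sum>k\<le>D. Q k y t * a ^ k))"

lemma pad_sum: fixes D E :: nat assumes "\<forall>k>D. f k = (0::real)" "D \<le> E" shows "(\<Sum>k\<le>D. f k) = (\<Sum>k\<le>E. f k)"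
  using assms by (intro sum.mono_neutral_left) auto

lemma rep_exists: fixes u :: "real^'n \<Rightarrow> real \<Rightarrow> real" shows "u \<in> poly_fun \<Longrightarrow> \<exists>D Q. rep u D Q"
proof (induction u rule: poly_fun.induct)
  case (pf_const c)
  have "rep (\<lambda>x t. c) 0 (\<lambda>k y t. if k = 0 then c else 0)"
    unfolding rep_def by (auto intro: poly_fun.intros)
  then show ?case by blast
next
  case (pf_coord i)
  define Q where "Q = (\<lambda>k::nat. if k = 1 then (\<lambda>(y::real^'n) (t::real). y $ i) else (\<lambda>y t. 0))"
  have "Q k \<in> poly_fun" for k unfolding Q_def by (auto intro: poly_fun.intros)
  moreover have "(\<Sum>k\<le>1. Q k y t * a ^ k) = a * y $ i" for a y t
    by (simp add: Q_def)
  ultimately have "rep (\<lambda>x t. x $ i) 1 Q"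
    unfolding rep_def by (auto simp: Q_def)
  then show ?case by blast
next
  case pf_time
  define Q where "Q = (\<lambda>k::nat. if k = 2 then (\<lambda>(y::real^'n) (t::real). -1::real) else (\<lambda>y t. 0))"
  have "Q k \<in> poly_fun" for k unfolding Q_def by (auto intro: poly_fun.intros)
  moreover have "(\<Sum>k\<le>2. Q k y t * a ^ k) = - (a\<^sup>2)" for a y t
    by (simp add: Q_def numeral_2_eq_2)
  ultimately have "rep (\<lambda>x t. t) 2 Q"
    unfolding rep_def by (auto simp: Q_def)
  then show ?case by blast
next
  case (pf_add p q)
  then obtain D1 Q1 D2 Q2 where r1: "rep p D1 Q1" and r2: "rep q D2 Q2" by blast
  define Q where "Q = (\<lambda>k y t. Q1 k y t + Q2 k y t)"
  have "rep (\<lambda>x t. p x t + q x t) (D1 + D2) Q"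
    unfolding rep_def
  proof (intro conjI allI impI)
    show "Q k \<in> poly_fun" for k using r1 r2 poly_fun.pf_add[of "Q1 k" "Q2 k"] unfolding rep_def Q_def by auto
    show "D1 + D2 < k \<Longrightarrow> Q k y t = 0" for k y t using r1 r2 unfolding rep_def Q_def by auto
    fix a y t
    have "p (a *\<^sub>R y) (-(a\<^sup>2)) = (\<Sum>k\<le>D1 + D2. Q1 k y t * a ^ k)"
      using r1 unfolding rep_def by (metis (no_types, lifting) le_add1 mult_zero_left pad_sum)
    moreover have "q (a *\<^sub>R y) (-(a\<^sup>2)) = (\<Sum>k\<le>D1 + D2. Q2 k y t * a ^ k)"
      using r2 unfolding rep_def by (metis (no_types, lifting) le_add2 mult_zero_left pad_sum)
    ultimately show "p (a *\<^sub>R y) (-(a\<^sup>2)) + q (a *\<^sub>R y) (-(a\<^sup>2)) = (\<Sum>k\<le>D1 + D2. Q k y t * a ^ k)"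
      by (simp add: Q_def distrib_right sum.distrib)
  qed
  then show ?case by blast
next
  case (pf_mult p q)
  then obtain D1 Q1 D2 Q2 where r1: "rep p D1 Q1" and r2: "rep q D2 Q2" by blast
  define Q where "Q = (\<lambda>k y t. \<Sum>j\<le>k. Q1 j y t * Q2 (k - j) y t)"
  have "rep (\<lambda>x t. p x t * q x t) (D1 + D2) Q"
    unfolding rep_def
  proof (intro conjI allI impI)
    show "Q k \<in> poly_fun" for k using r1 r2 unfolding rep_def Q_def
      by (intro pf_sum) (auto intro: poly_fun.pf_mult)
    show "D1 + D2 < k \<Longrightarrow> Q k y t = 0" for k y t
    proof -
      assume k: "D1 + D2 < k"
      have "Q1 j y t * Q2 (k - j) y t = 0" for j
        using r1 r2 k unfolding rep_def by (cases "j \<le> D1") auto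
      then show ?thesis unfolding Q_def by (intro sum.neutral) blast
    qed
    fix a y t
    have z1: "\<And>i. i > D1 \<Longrightarrow> Q1 i y t = 0" and z2: "\<And>i. i > D2 \<Longrightarrow> Q2 i y t = 0"
      using r1 r2 unfolding rep_def by auto
    show "p (a *\<^sub>R y) (-(a\<^sup>2)) * q (a *\<^sub>R y) (-(a\<^sup>2)) = (\<Sum>k\<le>D1 + D2. Q k y t * a ^ k)"
      using r1 r2 polynomial_product[of D1 "\<lambda>i. Q1 i y t" D2 "\<lambda>i. Q2 i y t" a, OF z1 z2]
      unfolding rep_def Q_def by simp
  qed
  then show ?case by blast
qed

lemma pdx_eqI: "((\<lambda>s. r (x + s *\<^sub>R axis i 1) t) has_real_derivative D) (at 0) \<Longrightarrow> pdx r i x t = D"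
  unfolding pdx_def by (rule DERIV_imp_deriv)

lemma pdx_add: "chainp p \<Longrightarrow> chainp q \<Longrightarrow>
  pdx (\<lambda>x t. p x t + q x t) i = (\<lambda>x t. pdx p i x t + pdx q i x t)"
  by (intro ext pdx_eqI DERIV_add chainp_lx)

lemma pdx_mult: "chainp p \<Longrightarrow> chainp q \<Longrightarrow>
  pdx (\<lambda>x t. p x t * q x t) i = (\<lambda>x t. pdx p i x t * q x t + p x t * pdx q i x t)"
proof (intro ext pdx_eqI)
  fix x t assume "chainp p" "chainp q"
  show "((\<lambda>s. p (x + s *\<^sub>R axis i 1) t * q (x + s *\<^sub>R axis i 1) t) has_real_derivative
      pdx p i x t * q x t + p x t * pdx q i x t) (at 0)"
    by (rule DERIV_eqv[OF DERIV_mult[OF chainp_lx[OF \<open>chainp p\<close>] chainp_lx[OF \<open>chainp q\<close>]]]) simp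
qed

lemma pdx_const: "pdx (\<lambda>x t. c) i = (\<lambda>x t. 0)"
  by (intro ext pdx_eqI) simp

lemma pdx_coord: "pdx (\<lambda>x t. x $ j) i = (\<lambda>x t. if j = i then 1 else 0)"
  by (intro ext pdx_eqI) (auto simp: axis_nth intro!: derivative_eq_intros)

lemma pdx_time: "pdx (\<lambda>x t. t) i = (\<lambda>x t. 0)"
  by (intro ext pdx_eqI) simp

lemma pf_pdx: "p \<in> poly_fun \<Longrightarrow> pdx p i \<in> poly_fun"
proof (induction p rule: poly_fun.induct)
  case (pf_const c) then show ?case by (simp add: pdx_const poly_fun.pf_const)
next
  case (pf_coord j) then show ?case by (simp add: pdx_coord poly_fun.pf_const)
next
  case pf_time then show ?case by (simp add: pdx_time poly_fun.pf_const)
next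
  case (pf_add p q) then show ?case by (simp add: pdx_add pf_chainp poly_fun.pf_add)
next
  case (pf_mult p q) then show ?case
    by (simp add: pdx_mult pf_chainp poly_fun.pf_add poly_fun.pf_mult)
qed

lemma pdx_lin: assumes "finite K" "\<And>k. k \<in> K \<Longrightarrow> chainp (Q k)"
  shows "pdx (\<lambda>y t. \<Sum>k\<in>K. Q k y t * c k) i = (\<lambda>y t. \<Sum>k\<in>K. pdx (Q k) i y t * c k)"
  using assms by (intro ext pdx_eqI DERIV_sum DERIV_cmult_right chainp_lx) auto

lemma pdx_scale: fixes u :: "real^'n \<Rightarrow> real \<Rightarrow> real" assumes "chainp u"
  shows "pdx (\<lambda>y t. u (a *\<^sub>R y) b) i = (\<lambda>y t. a * pdx u i (a *\<^sub>R y) b)"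
proof (intro ext pdx_eqI)
  fix y :: "real^'n" and t
  have pr: "((\<lambda>s. (a *\<^sub>R (y + s *\<^sub>R axis i 1)) $ j) has_real_derivative (a *\<^sub>R axis i 1) $ j) (at 0)" for j
    by (auto simp: axis_nth intro!: derivative_eq_intros)
  have c: "((\<lambda>_. b) has_real_derivative 0) (at 0)" by simp
  have sm: "(\<Sum>k\<in>UNIV. a * axis i 1 $ k * pdx u k (a *\<^sub>R y) b) = a * pdx u i (a *\<^sub>R y) b"
  proof -
    have "a * axis i 1 $ k * pdx u k (a *\<^sub>R y) b = (if k = i then a * pdx u k (a *\<^sub>R y) b else 0)" for k
      by (simp add: axis_nth)
    then show ?thesis by simp
  qed
  show "((\<lambda>s. u (a *\<^sub>R (y + s *\<^sub>R axis i 1)) b) has_real_derivative a * pdx u i (a *\<^sub>R y) b) (at 0)"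
    using assms[unfolded chainp_def, rule_format, where X="\<lambda>s. a *\<^sub>R (y + s *\<^sub>R axis i 1)" and X'="a *\<^sub>R axis i 1" and T="\<lambda>_. b" and T'=0 and s=0, OF pr c]
    by (simp add: sm)
qed

definition rad :: "(real^'n \<Rightarrow> real \<Rightarrow> real) \<Rightarrow> real^'n \<Rightarrow> real \<Rightarrow> real" where
  "rad u y t = (\<Sum>i\<in>UNIV. y $ i * pdx u i y t)"

lemma line_scale: fixes u :: "real^'n \<Rightarrow> real \<Rightarrow> real" assumes "chainp u"
  shows "((\<lambda>s. u (a *\<^sub>R (y + s *\<^sub>R axis i 1)) b) has_real_derivative a * pdx u i (a *\<^sub>R y) b) (at 0)"
proof -
  have pr: "((\<lambda>s. (a *\<^sub>R (y + s *\<^sub>R axis i 1)) $ j) has_real_derivative (a *\<^sub>R axis i 1) $ j) (at 0)" for j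
    by (auto simp: axis_nth intro!: derivative_eq_intros)
  have c: "((\<lambda>_. b) has_real_derivative 0) (at 0)" by simp
  have sm: "(\<Sum>k\<in>UNIV. a * axis i 1 $ k * pdx u k (a *\<^sub>R y) b) = a * pdx u i (a *\<^sub>R y) b"
  proof -
    have "a * axis i 1 $ k * pdx u k (a *\<^sub>R y) b = (if k = i then a * pdx u k (a *\<^sub>R y) b else 0)" for k
      by (simp add: axis_nth)
    then show ?thesis by simp
  qed
  show ?thesis
    using assms[unfolded chainp_def, rule_format, where X="\<lambda>s. a *\<^sub>R (y + s *\<^sub>R axis i 1)" and X'="a *\<^sub>R axis i 1" and T="\<lambda>_. b" and T'=0 and s=0, OF pr c]
    by (simp add: sm)
qed

lemma pdx_scale_c: fixes u :: "real^'n \<Rightarrow> real \<Rightarrow> real" assumes "chainp u"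
  shows "pdx (\<lambda>y t. c * u (a *\<^sub>R y) b) i = (\<lambda>y t. c * (a * pdx u i (a *\<^sub>R y) b))"
  by (intro ext pdx_eqI DERIV_cmult line_scale assms)

lemma swap_aux: "(\<Sum>i\<in>A. (c i::real) * (\<Sum>k\<in>B. f k i * g k)) = (\<Sum>k\<in>B. (\<Sum>i\<in>A. c i * f k i) * g k)"
  unfolding sum_distrib_left sum_distrib_right by (subst sum.swap) (simp add: mult_ac)

lemma eigen:
  fixes u :: "real^'n \<Rightarrow> real \<Rightarrow> real"
  assumes cal: "caloric_poly u" and r: "rep u D Q"
  shows "rad (Q k) y t - 2 * laplacian (Q k) y t = real k * Q k y t"
proof (cases "k \<le> D")
  case False
  then have "Q k = (\<lambda>y t. 0)" using r unfolding rep_def by (intro ext) (simp add: not_le)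
  then show ?thesis by (simp add: rad_def laplacian_def pdx_const)
next
  case True
  have uP: "u \<in> poly_fun" using cal unfolding caloric_poly_def by simp
  have chu: "chainp u" by (rule pf_chainp[OF uP])
  have chu2: "chainp (pdx u i)" for i by (rule pf_chainp[OF pf_pdx[OF uP]])
  have QP: "Q k \<in> poly_fun" for k using r unfolding rep_def by simp
  have chQ: "chainp (Q k)" for k by (rule pf_chainp[OF QP])
  have chQ2: "chainp (pdx (Q k) i)" for k i by (rule pf_chainp[OF pf_pdx[OF QP]])
  have Vrep: "(\<lambda>y t. u (a *\<^sub>R y) (-(a\<^sup>2))) = (\<lambda>y t. \<Sum>k\<le>D. Q k y t * a ^ k)" for a
    using r unfolding rep_def by auto
  have E1: "(\<Sum>k\<le>D. Q k y t * (real k * a ^ (k - 1))) =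
      (\<Sum>i\<in>UNIV. y $ i * pdx u i (a *\<^sub>R y) (-(a\<^sup>2))) + (- 2 * a) * pdt u (a *\<^sub>R y) (-(a\<^sup>2))" for a
  proof -
    have pr: "((\<lambda>s. (s *\<^sub>R y) $ j) has_real_derivative y $ j) (at a)" for j
      by (auto intro!: derivative_eq_intros)
    have c: "((\<lambda>s. -(s\<^sup>2)) has_real_derivative (- 2 * a)) (at a)"
      by (auto intro!: derivative_eq_intros)
    have d1: "((\<lambda>s. u (s *\<^sub>R y) (-(s\<^sup>2))) has_real_derivative
      (\<Sum>i\<in>UNIV. y $ i * pdx u i (a *\<^sub>R y) (-(a\<^sup>2))) + (- 2 * a) * pdt u (a *\<^sub>R y) (-(a\<^sup>2))) (at a)"
      using chu[unfolded chainp_def, rule_format, where X="\<lambda>s. s *\<^sub>R y" and X'=y and T="\<lambda>s. -(s\<^sup>2)" and T'="- 2 * a" and s=a, OF pr c]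
      by simp
    have d2': "((\<lambda>s. \<Sum>k\<le>D. Q k y t * s ^ k) has_real_derivative (\<Sum>k\<le>D. real k * a ^ (k - Suc 0) * Q k y t)) (at a)"
      by (auto intro!: derivative_eq_intros)
    have d2: "((\<lambda>s. \<Sum>k\<le>D. Q k y t * s ^ k) has_real_derivative (\<Sum>k\<le>D. Q k y t * (real k * a ^ (k - 1)))) (at a)"
      by (rule DERIV_eqv[OF d2']) (simp add: mult_ac)
    have eqf: "(\<lambda>s. u (s *\<^sub>R y) (-(s\<^sup>2))) = (\<lambda>s. \<Sum>k\<le>D. Q k y t * s ^ k)"
      using r unfolding rep_def by auto
    show ?thesis using DERIV_unique[OF d2 d1[unfolded eqf]] .
  qed
  have E2: "a * pdx u i (a *\<^sub>R y) (-(a\<^sup>2)) = (\<Sum>k\<le>D. pdx (Q k) i y t * a ^ k)" for a i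
  proof -
    have "pdx (\<lambda>y t. u (a *\<^sub>R y) (-(a\<^sup>2))) i y t = a * pdx u i (a *\<^sub>R y) (-(a\<^sup>2))"
      using pdx_scale[OF chu] by simp
    moreover have "pdx (\<lambda>y t. u (a *\<^sub>R y) (-(a\<^sup>2))) i y t = (\<Sum>k\<le>D. pdx (Q k) i y t * a ^ k)"
      unfolding Vrep by (subst pdx_lin) (auto intro: chQ)
    ultimately show ?thesis by simp
  qed
  have E3i: "a * (a * pdx (pdx u i) i (a *\<^sub>R y) (-(a\<^sup>2))) = (\<Sum>k\<le>D. pdx (pdx (Q k) i) i y t * a ^ k)" for a i
  proof -
    have "pdx (pdx (\<lambda>y t. u (a *\<^sub>R y) (-(a\<^sup>2))) i) i y t = a * (a * pdx (pdx u i) i (a *\<^sub>R y) (-(a\<^sup>2)))"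
      unfolding pdx_scale[OF chu] pdx_scale_c[OF chu2] by simp
    moreover have "pdx (pdx (\<lambda>y t. u (a *\<^sub>R y) (-(a\<^sup>2))) i) i y t = (\<Sum>k\<le>D. pdx (pdx (Q k) i) i y t * a ^ k)"
      unfolding Vrep by (subst pdx_lin, auto intro: chQ, subst pdx_lin, auto intro: chQ2)
    ultimately show ?thesis by simp
  qed
  have E3: "a\<^sup>2 * laplacian u (a *\<^sub>R y) (-(a\<^sup>2)) = (\<Sum>k\<le>D. laplacian (Q k) y t * a ^ k)" for a
  proof -
    have "a\<^sup>2 * laplacian u (a *\<^sub>R y) (-(a\<^sup>2)) = (\<Sum>i\<in>UNIV. a * (a * pdx (pdx u i) i (a *\<^sub>R y) (-(a\<^sup>2))))"
      by (simp add: laplacian_def sum_distrib_left power2_eq_square mult.assoc)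
    also have "\<dots> = (\<Sum>i\<in>UNIV. \<Sum>k\<le>D. pdx (pdx (Q k) i) i y t * a ^ k)" using E3i by simp
    also have "\<dots> = (\<Sum>k\<le>D. laplacian (Q k) y t * a ^ k)"
      by (subst sum.swap) (simp add: laplacian_def sum_distrib_right)
    finally show ?thesis .
  qed
  have cal': "pdt u x s = laplacian u x s" for x s using cal unfolding caloric_poly_def by simp
  have main: "(\<Sum>k\<le>D. (real k * Q k y t - rad (Q k) y t + 2 * laplacian (Q k) y t) * a ^ k) = 0" for a
  proof -
    have "(\<Sum>k\<le>D. real k * Q k y t * a ^ k) = a * (\<Sum>k\<le>D. Q k y t * (real k * a ^ (k - 1)))"
      unfolding sum_distrib_left
    proof (rule sum.cong)
      fix k
      show "real k * Q k y t * a ^ k = a * (Q k y t * (real k * a ^ (k - 1)))"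
        by (cases k) (auto simp: algebra_simps)
    qed simp
    also have "\<dots> = (\<Sum>i\<in>UNIV. y $ i * (a * pdx u i (a *\<^sub>R y) (-(a\<^sup>2)))) - 2 * (a\<^sup>2 * laplacian u (a *\<^sub>R y) (-(a\<^sup>2)))"
      unfolding E1 cal' by (simp add: algebra_simps sum_distrib_left power2_eq_square)
    also have "\<dots> = (\<Sum>k\<le>D. rad (Q k) y t * a ^ k) - 2 * (\<Sum>k\<le>D. laplacian (Q k) y t * a ^ k)"
      unfolding E2 E3 rad_def swap_aux ..
    finally show ?thesis
      by (simp add: algebra_simps sum.distrib sum_subtractf sum_distrib_left)
  qed
  have "real k * Q k y t - rad (Q k) y t + 2 * laplacian (Q k) y t = 0"
    using polyfun_eq_0[THEN iffD1, OF allI[OF main]] True by blast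
  then show ?thesis by simp
qed


lemma pf_meas: "p \<in> poly_fun \<Longrightarrow> (\<lambda>y. p y t) \<in> borel_measurable borel"
  by (induction p rule: poly_fun.induct) auto

lemma pf_growth: "p \<in> poly_fun \<Longrightarrow> \<exists>C\<ge>0. \<exists>\<alpha>\<ge>0. \<forall>y. \<bar>p y t\<bar> \<le> C * exp (\<alpha> * norm y)"
proof (induction p rule: poly_fun.induct)
  case (pf_const c)
  show ?case by (rule exI[of _ "\<bar>c\<bar>"], simp, rule exI[of _ 0], simp)
next
  case (pf_coord i)
  have "\<bar>y $ i\<bar> \<le> 1 * exp (1 * norm y)" for y :: "real^'a"
  proof -
    have "\<bar>y $ i\<bar> \<le> norm y" by (rule component_le_norm_cart)
    also have "\<dots> \<le> exp (norm y)" using exp_ge_add_one_self[of "norm y"] by linarith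
    finally show ?thesis by simp
  qed
  then show ?case by (intro exI[of _ 1] conjI) auto
next
  case pf_time
  show ?case by (rule exI[of _ "\<bar>t\<bar>"], simp, rule exI[of _ 0], simp)
next
  case (pf_add p q)
  then obtain C1 a1 C2 a2 where h: "C1 \<ge> 0" "a1 \<ge> 0" "\<forall>y. \<bar>p y t\<bar> \<le> C1 * exp (a1 * norm y)"
     "C2 \<ge> 0" "a2 \<ge> 0" "\<forall>y. \<bar>q y t\<bar> \<le> C2 * exp (a2 * norm y)" by blast
  have "\<bar>p y t + q y t\<bar> \<le> (C1 + C2) * exp ((a1 + a2) * norm y)" for y
  proof -
    have e1: "exp (a1 * norm y) \<le> exp ((a1 + a2) * norm y)" using h by (simp add: mult_right_mono)
    have e2: "exp (a2 * norm y) \<le> exp ((a1 + a2) * norm y)" using h by (simp add: mult_right_mono)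
    have "\<bar>p y t + q y t\<bar> \<le> C1 * exp (a1 * norm y) + C2 * exp (a2 * norm y)"
      using h(3,6) abs_triangle_ineq[of "p y t" "q y t"] by (meson add_mono order_trans)
    also have "\<dots> \<le> C1 * exp ((a1 + a2) * norm y) + C2 * exp ((a1 + a2) * norm y)"
      using e1 e2 h by (intro add_mono mult_left_mono) auto
    finally show ?thesis by (simp add: distrib_right)
  qed
  then show ?case using h by (intro exI[of _ "C1 + C2"] conjI exI[of _ "a1 + a2"]) auto
next
  case (pf_mult p q)
  then obtain C1 a1 C2 a2 where h: "C1 \<ge> 0" "a1 \<ge> 0" "\<forall>y. \<bar>p y t\<bar> \<le> C1 * exp (a1 * norm y)"
     "C2 \<ge> 0" "a2 \<ge> 0" "\<forall>y. \<bar>q y t\<bar> \<le> C2 * exp (a2 * norm y)" by blast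
  have "\<bar>p y t * q y t\<bar> \<le> (C1 * C2) * exp ((a1 + a2) * norm y)" for y
  proof -
    have "\<bar>p y t * q y t\<bar> \<le> (C1 * exp (a1 * norm y)) * (C2 * exp (a2 * norm y))"
      unfolding abs_mult using h by (intro mult_mono) auto
    moreover have "exp ((a1 + a2) * norm y) = exp (a1 * norm y) * exp (a2 * norm y)"
      by (simp add: distrib_right exp_add)
    ultimately show ?thesis by (simp add: mult_ac)
  qed
  then show ?case using h by (intro exI[of _ "C1 * C2"] conjI exI[of _ "a1 + a2"]) auto
qed

lemma integrable_gauss1: "integrable lborel (\<lambda>s::real. exp (- s\<^sup>2 / 8))"
proof -
  have A: "integrable lborel (\<lambda>s. sqrt (2 * pi * 2\<^sup>2) * normal_density 0 2 s)"
    by (intro integrable_mult_right integrable_normal_density) auto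
  have B: "sqrt (2 * pi * 2\<^sup>2) * normal_density 0 2 s = exp (- s\<^sup>2 / 8)" for s :: real
  proof -
    have "sqrt (2 * pi * 2\<^sup>2) > 0" by simp
    then show ?thesis unfolding normal_density_def by (simp add: field_simps)
  qed
  show ?thesis using A unfolding B .
qed

lemma integrable_gauss: "integrable lborel (\<lambda>y::'a::euclidean_space. exp (- (norm y)\<^sup>2 / 8))"
proof -
  have eq: "exp (- (norm y)\<^sup>2 / 8) = (\<Prod>b\<in>Basis. exp (- (y \<bullet> b)\<^sup>2 / 8))" for y :: 'a
  proof -
    have "(norm y)\<^sup>2 = (\<Sum>b\<in>Basis. (y \<bullet> b)\<^sup>2)"
      by (subst power2_norm_eq_inner, subst euclidean_inner, simp add: power2_eq_square)
    then have "- (norm y)\<^sup>2 / 8 = (\<Sum>b\<in>Basis. - (y \<bullet> b)\<^sup>2 / 8)"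
      by (simp add: sum_divide_distrib sum_negf)
    then show ?thesis by (simp add: exp_sum)
  qed
  have i1: "(\<integral>\<^sup>+s. ennreal (exp (- s\<^sup>2 / 8)) \<partial>lborel) = ennreal (LINT s|lborel. exp (- s\<^sup>2 / 8))"
    by (rule nn_integral_eq_integral[OF integrable_gauss1]) auto
  have "(\<integral>\<^sup>+y. ennreal (norm (exp (- (norm y)\<^sup>2 / 8))) \<partial>(lborel::'a measure)) =
        (\<integral>\<^sup>+y. (\<Prod>b\<in>(Basis::'a set). (\<lambda>b s. ennreal (exp (- s\<^sup>2 / 8))) b (y \<bullet> b)) \<partial>lborel)"
    unfolding eq by (simp add: prod_ennreal prod_nonneg)
  also have "\<dots> = (\<Prod>b\<in>(Basis::'a set). (\<integral>\<^sup>+s. ennreal (exp (- s\<^sup>2 / 8)) \<partial>lborel))"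
    by (rule nn_integral_lborel_prod) auto
  also have "\<dots> = ennreal (\<Prod>b\<in>(Basis::'a set). (LINT s|lborel. exp (- s\<^sup>2 / 8)))"
    unfolding i1 by (rule prod_ennreal) auto
  also have "\<dots> < \<infinity>" by simp
  finally show ?thesis
    by (intro integrableI_bounded) auto
qed

lemma expgauss_pw: fixes \<beta> r :: real shows "norm (exp (\<beta> * r - r\<^sup>2 / 4)) \<le> norm (exp (2 * \<beta>\<^sup>2) * exp (- r\<^sup>2 / 8))"
proof -
  have "\<beta> * r - r\<^sup>2 / 4 \<le> 2 * \<beta>\<^sup>2 + (- r\<^sup>2 / 8)"
  proof -
    have "0 \<le> (r - 4 * \<beta>)\<^sup>2 / 8" by simp
    then show ?thesis by (simp add: power2_eq_square algebra_simps)
  qed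
  then show ?thesis by (simp add: exp_add[symmetric])
qed

lemma integrable_expgauss: "integrable lborel (\<lambda>y::'a::euclidean_space. exp (\<beta> * norm y - (norm y)\<^sup>2 / 4))"
proof (rule Bochner_Integration.integrable_bound[OF integrable_mult_right[OF integrable_gauss, of "exp (2 * \<beta>\<^sup>2)"]])
  show "(\<lambda>y::'a. exp (\<beta> * norm y - (norm y)\<^sup>2 / 4)) \<in> borel_measurable lborel" by simp
  show "AE y in lborel. norm (exp (\<beta> * norm y - (norm y)\<^sup>2 / 4)) \<le> norm (exp (2 * \<beta>\<^sup>2) * exp (- (norm y)\<^sup>2 / 8))"
    apply (intro AE_I2)
    subgoal for y using expgauss_pw[of \<beta> "norm y"] by simp
    done
qed

abbreviation G1 :: "real^'n \<Rightarrow> real" where "G1 y \<equiv> heatG y (-1)"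

lemma G1_eq: "G1 y = (4 * pi) powr (- real CARD('n) / 2) * exp (- (norm y)\<^sup>2 / 4)"
  for y :: "real^'n"
  by (simp add: heatG_def)

lemma G1_pos: "G1 y > 0" by (simp add: G1_eq)

lemma G1_meas: "(G1 :: real^'n \<Rightarrow> real) \<in> borel_measurable borel"
  unfolding G1_eq by simp

lemma integrable_pfG: assumes "p \<in> poly_fun"
  shows "integrable lborel (\<lambda>y. p y t * G1 y)"
proof -
  obtain C \<alpha> where h: "C \<ge> 0" "\<alpha> \<ge> 0" "\<forall>y. \<bar>p y t\<bar> \<le> C * exp (\<alpha> * norm y)"
    using pf_growth[OF assms, of t] by blast
  define c where "c = (4 * pi) powr (- real CARD('a) / 2)"
  have c: "c > 0" unfolding c_def by simp
  show ?thesis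
  proof (rule Bochner_Integration.integrable_bound[OF integrable_mult_right[OF integrable_expgauss, of "C * c" \<alpha>]])
    show "(\<lambda>y. p y t * G1 y) \<in> borel_measurable lborel"
      unfolding measurable_lborel2 by (intro borel_measurable_times pf_meas[OF assms] G1_meas)
    show "AE y in lborel. norm (p y t * G1 y) \<le> norm (C * c * exp (\<alpha> * norm y - (norm y)\<^sup>2 / 4))"
    proof (rule AE_I2)
      fix y :: "real^'a"
      have "norm (p y t * G1 y) = \<bar>p y t\<bar> * (c * exp (- (norm y)\<^sup>2 / 4))"
        by (simp add: G1_eq c_def abs_mult)
      also have "\<dots> \<le> (C * exp (\<alpha> * norm y)) * (c * exp (- (norm y)\<^sup>2 / 4))"
        using h c by (intro mult_right_mono) auto
      also have "\<dots> = C * c * exp (\<alpha> * norm y - (norm y)\<^sup>2 / 4)"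
      proof -
        have "exp (\<alpha> * norm y - (norm y)\<^sup>2 / 4) = exp (\<alpha> * norm y) * exp (- (norm y)\<^sup>2 / 4)"
          by (simp add: exp_add[symmetric])
        then show ?thesis by (simp add: mult_ac)
      qed
      also have "\<dots> \<le> norm (C * c * exp (\<alpha> * norm y - (norm y)\<^sup>2 / 4))" by simp
      finally show "norm (p y t * G1 y) \<le> norm (C * c * exp (\<alpha> * norm y - (norm y)\<^sup>2 / 4))" .
    qed
  qed
qed

lemma ibp_gen:
  fixes g h w :: "'a::euclidean_space \<Rightarrow> real" and e :: 'a
  assumes gm[measurable]: "g \<in> borel_measurable borel" and hm[measurable]: "h \<in> borel_measurable borel"
    and gi: "integrable lborel g" and wi: "integrable lborel w"
    and der: "\<And>y s. ((\<lambda>\<sigma>. g (y + \<sigma> *\<^sub>R e)) has_real_derivative h (y + s *\<^sub>R e)) (at s)"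
    and bnd: "\<And>y \<sigma>. 0 \<le> \<sigma> \<Longrightarrow> \<sigma> \<le> 1 \<Longrightarrow> \<bar>h (y + \<sigma> *\<^sub>R e)\<bar> \<le> w y"
  shows "integral\<^sup>L lborel h = 0"
proof -
  define S where "S m = inverse (real (Suc m))" for m
  have S: "0 < S m" "S m \<le> 1" for m unfolding S_def by (auto simp: field_simps)
  define F where "F m y = (g (y + S m *\<^sub>R e) - g y) / S m" for m y
  have trans: "integral\<^sup>L lborel (\<lambda>y. g (y + c)) = integral\<^sup>L lborel g"
    and transi: "integrable lborel (\<lambda>y. g (y + c))" for c :: 'a
  proof -
    have "integral\<^sup>L lborel g = integral\<^sup>L (distr lborel borel ((+) c)) g"
      by (simp add: lborel_distr_plus)
    also have "\<dots> = integral\<^sup>L lborel (\<lambda>y. g (c + y))"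
      by (rule integral_distr) auto
    finally show "integral\<^sup>L lborel (\<lambda>y. g (y + c)) = integral\<^sup>L lborel g" by (simp add: add.commute)
    have "integrable (distr lborel borel ((+) c)) g"
      using gi by (simp add: lborel_distr_plus)
    then have "integrable lborel (\<lambda>y. g (c + y))"
      by (subst integrable_distr_eq[symmetric]) auto
    then show "integrable lborel (\<lambda>y. g (y + c))" by (simp add: add.commute)
  qed
  have F0: "integral\<^sup>L lborel (F m) = 0" for m
  proof -
    have "integral\<^sup>L lborel (F m) = (integral\<^sup>L lborel (\<lambda>y. g (y + S m *\<^sub>R e)) - integral\<^sup>L lborel g) / S m"
      unfolding F_def by (simp add: Bochner_Integration.integral_diff[OF transi gi])
    then show ?thesis by (simp add: trans)
  qed
  have lim: "(\<lambda>m. F m y) \<longlonglongrightarrow> h y" for y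
  proof -
    have "((\<lambda>\<sigma>. g (y + \<sigma> *\<^sub>R e)) has_real_derivative h y) (at 0)"
      using der[of y 0] by simp
    then have "((\<lambda>\<sigma>. (g (y + \<sigma> *\<^sub>R e) - g (y + 0 *\<^sub>R e)) / (\<sigma> - 0)) \<longlongrightarrow> h y) (at 0)"
      unfolding has_field_derivative_iff .
    then have "((\<lambda>\<sigma>. (g (y + \<sigma> *\<^sub>R e) - g y) / \<sigma>) \<longlongrightarrow> h y) (at 0)" by simp
    moreover have "\<forall>i. S i \<in> UNIV - {0}" using S by (auto simp: less_le)
    moreover have "S \<longlonglongrightarrow> 0" unfolding S_def by (rule LIMSEQ_inverse_real_of_nat)
    ultimately have "((\<lambda>\<sigma>. (g (y + \<sigma> *\<^sub>R e) - g y) / \<sigma>) \<circ> S) \<longlonglongrightarrow> h y"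
      unfolding tendsto_at_iff_sequentially by blast
    then show ?thesis unfolding F_def comp_def .
  qed
  have bound: "norm (F m y) \<le> w y" for m y
  proof -
    have "\<exists>z. 0 < z \<and> z < S m \<and> g (y + S m *\<^sub>R e) - g (y + 0 *\<^sub>R e) = (S m - 0) * h (y + z *\<^sub>R e)"
      by (rule MVT2[OF S(1)]) (rule der)
    then obtain z where z: "0 < z" "z < S m" "g (y + S m *\<^sub>R e) - g y = S m * h (y + z *\<^sub>R e)" by auto
    have "F m y = h (y + z *\<^sub>R e)" unfolding F_def z(3) using S(1)[of m] by simp
    moreover have "\<bar>h (y + z *\<^sub>R e)\<bar> \<le> w y" using z S(2)[of m] by (intro bnd) auto
    ultimately show ?thesis by simp
  qed
  have Fm[measurable]: "F m \<in> borel_measurable lborel" for m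
    unfolding F_def by measurable
  have "(\<lambda>m. integral\<^sup>L lborel (F m)) \<longlonglongrightarrow> integral\<^sup>L lborel h"
    by (rule integral_dominated_convergence[where w=w]) (use wi lim bound in auto)
  then have "(\<lambda>m. 0::real) \<longlonglongrightarrow> integral\<^sup>L lborel h" by (simp add: F0)
  then show ?thesis using LIMSEQ_unique tendsto_const by metis
qed

lemma chainp_line:
  fixes r :: "real^'n \<Rightarrow> real \<Rightarrow> real"
  assumes "chainp r"
  shows "((\<lambda>\<sigma>. r (y + \<sigma> *\<^sub>R axis i 1) t) has_real_derivative pdx r i (y + s *\<^sub>R axis i 1) t) (at s)"
proof -
  have pr: "((\<lambda>\<sigma>. (y + \<sigma> *\<^sub>R axis i 1) $ j) has_real_derivative axis i 1 $ j) (at s)" for j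
    by (auto simp: axis_nth intro!: derivative_eq_intros)
  have c: "((\<lambda>_. t) has_real_derivative 0) (at s)" by simp
  have sm: "(\<Sum>k\<in>UNIV. axis i 1 $ k * pdx r k (y + s *\<^sub>R axis i 1) t) = pdx r i (y + s *\<^sub>R axis i 1) t"
  proof -
    have "axis i 1 $ k * pdx r k (y + s *\<^sub>R axis i 1) t = (if k = i then pdx r k (y + s *\<^sub>R axis i 1) t else 0)" for k
      by (simp add: axis_nth)
    then show ?thesis by simp
  qed
  have "((\<lambda>\<sigma>. r (y + \<sigma> *\<^sub>R axis i 1) t) has_real_derivative
     (\<Sum>k\<in>UNIV. axis i 1 $ k * pdx r k (y + s *\<^sub>R axis i 1) t) + 0 * pdt r (y + s *\<^sub>R axis i 1) t) (at s)"
    using assms[unfolded chainp_def, rule_format, where X="\<lambda>\<sigma>. y + \<sigma> *\<^sub>R axis i 1" and X'="axis i 1" and T="\<lambda>_. t" and T'=0 and s=s, OF pr c] .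
  then show ?thesis unfolding sm by simp
qed

lemma norm_line: fixes y :: "real^'n"
  shows "(norm (y + \<sigma> *\<^sub>R axis i 1))\<^sup>2 = (norm y)\<^sup>2 + 2 * \<sigma> * y $ i + \<sigma>\<^sup>2"
  unfolding power2_norm_eq_inner
  by (simp add: inner_add_left inner_add_right inner_axis inner_axis' inner_axis_axis power2_eq_square algebra_simps)

lemma G1_line: fixes y :: "real^'n"
  shows "((\<lambda>\<sigma>. G1 (y + \<sigma> *\<^sub>R axis i 1)) has_real_derivative
          - (G1 (y + s *\<^sub>R axis i 1) * ((y + s *\<^sub>R axis i 1) $ i / 2))) (at s)"
proof -
  define c where "c = (4 * pi) powr (- real CARD('n) / 2)"
  have eq: "G1 (y + \<sigma> *\<^sub>R axis i 1) = c * exp (- ((norm y)\<^sup>2 + 2 * \<sigma> * y $ i + \<sigma>\<^sup>2) / 4)" for \<sigma>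
    unfolding G1_eq c_def norm_line ..
  have "((\<lambda>\<sigma>. c * exp (- ((norm y)\<^sup>2 + 2 * \<sigma> * y $ i + \<sigma>\<^sup>2) / 4)) has_real_derivative
      c * (exp (- ((norm y)\<^sup>2 + 2 * s * y $ i + s\<^sup>2) / 4) * (- (2 * y $ i + 2 * s) / 4))) (at s)"
    by (auto intro!: derivative_eq_intros simp: power2_eq_square field_simps)
  then show ?thesis unfolding eq
    by (rule DERIV_eqv) (simp add: axis_nth field_simps)
qed

lemma ibp_pf:
  fixes p :: "real^'n \<Rightarrow> real \<Rightarrow> real"
  assumes pP: "p \<in> poly_fun"
  shows "integral\<^sup>L lborel (\<lambda>y. pdx p i y t * G1 y) = integral\<^sup>L lborel (\<lambda>y. p y t * (y $ i / 2) * G1 y)"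
proof -
  define h0 where "h0 = (\<lambda>z t'. pdx p i z t' + (- 1 / 2) * (z $ i * p z t'))"
  have h0P: "h0 \<in> poly_fun" unfolding h0_def
    by (intro poly_fun.pf_add pf_pdx pP pf_scale poly_fun.pf_mult poly_fun.pf_coord)
  have q1P: "(\<lambda>y t. p y t * (y $ i / 2)) \<in> poly_fun"
    using poly_fun.pf_mult[OF pP pf_scale[OF poly_fun.pf_coord[of i], of "1/2"]] by simp
  obtain C \<alpha> where h: "C \<ge> 0" "\<alpha> \<ge> 0" "\<forall>z. \<bar>h0 z t\<bar> \<le> C * exp (\<alpha> * norm z)"
    using pf_growth[OF h0P, of t] by blast
  define c where "c = (4 * pi) powr (- real CARD('n) / 2)"
  have c: "c > 0" unfolding c_def by simp
  define w where "w y = C * c * exp \<alpha> * exp ((\<alpha> + 1/2) * norm y - (norm y)\<^sup>2 / 4)" for y :: "real^'n"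
  define h where "h y = (pdx p i y t - p y t * (y $ i / 2)) * G1 y" for y
  have hh0: "h y = h0 y t * G1 y" for y unfolding h_def h0_def by (simp add: algebra_simps)
  have "integral\<^sup>L lborel h = 0"
  proof (rule ibp_gen[where g="\<lambda>y. p y t * G1 y" and e="axis i 1" and w=w])
    show "(\<lambda>y. p y t * G1 y) \<in> borel_measurable borel"
      by (intro borel_measurable_times pf_meas[OF pP] G1_meas)
    show "h \<in> borel_measurable borel" unfolding hh0[abs_def]
      by (intro borel_measurable_times pf_meas[OF h0P] G1_meas)
    show "integrable lborel (\<lambda>y. p y t * G1 y)" by (rule integrable_pfG[OF pP])
    show "integrable lborel w" unfolding w_def
      by (intro integrable_mult_right integrable_expgauss)
    show "((\<lambda>\<sigma>. p (y + \<sigma> *\<^sub>R axis i 1) t * G1 (y + \<sigma> *\<^sub>R axis i 1)) has_real_derivative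
        h (y + s *\<^sub>R axis i 1)) (at s)" for y s
      unfolding h_def
      by (rule DERIV_eqv[OF DERIV_mult[OF chainp_line[OF pf_chainp[OF pP]] G1_line]]) (simp add: algebra_simps)
    show "\<bar>h (y + \<sigma> *\<^sub>R axis i 1)\<bar> \<le> w y" if s: "0 \<le> \<sigma>" "\<sigma> \<le> 1" for y \<sigma>
    proof -
      define z where "z = y + \<sigma> *\<^sub>R axis i 1"
      have nz1: "norm z \<le> norm y + 1"
        unfolding z_def using norm_triangle_ineq[of y "\<sigma> *\<^sub>R axis i 1"] s by simp
      have nz2: "norm y - 1 \<le> norm z"
      proof -
        have "y = z - \<sigma> *\<^sub>R axis i 1" unfolding z_def by simp
        then have "norm y \<le> norm z + norm (\<sigma> *\<^sub>R axis i (1::real))" using norm_triangle_ineq4[of z "\<sigma> *\<^sub>R axis i 1"] by simp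
        then show ?thesis using s by simp
      qed
      have e1: "exp (\<alpha> * norm z) \<le> exp \<alpha> * exp (\<alpha> * norm y)"
      proof -
        have "\<alpha> * norm z \<le> \<alpha> + \<alpha> * norm y" using mult_left_mono[OF nz1 h(2)] by (simp add: algebra_simps)
        then show ?thesis by (simp add: exp_add[symmetric])
      qed
      have sq: "- (norm z)\<^sup>2 / 4 \<le> 1/2 * norm y - (norm y)\<^sup>2 / 4"
      proof (cases "norm y \<ge> 1")
        case True
        then have "(norm y - 1)\<^sup>2 \<le> (norm z)\<^sup>2" using nz2 by (intro power_mono) auto
        then show ?thesis by (simp add: power2_eq_square algebra_simps)
      next
        case False
        then have "1/2 * norm y - (norm y)\<^sup>2 / 4 \<ge> 0"
        proof -
          have "norm y * norm y \<le> norm y * 2" using False by (intro mult_left_mono) auto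
          then show ?thesis by (simp add: power2_eq_square field_simps)
        qed
        moreover have "- (norm z)\<^sup>2 / 4 \<le> 0" by simp
        ultimately show ?thesis by linarith
      qed
      have "\<bar>h z\<bar> = \<bar>h0 z t\<bar> * (c * exp (- (norm z)\<^sup>2 / 4))"
        unfolding hh0 by (simp add: G1_eq c_def abs_mult)
      also have "\<dots> \<le> (C * (exp \<alpha> * exp (\<alpha> * norm y))) * (c * exp (1/2 * norm y - (norm y)\<^sup>2 / 4))"
      proof (rule mult_mono)
        show "\<bar>h0 z t\<bar> \<le> C * (exp \<alpha> * exp (\<alpha> * norm y))"
          using h(3)[rule_format, of z] e1 h(1) by (meson mult_left_mono order_trans)
        show "c * exp (- (norm z)\<^sup>2 / 4) \<le> c * exp (1/2 * norm y - (norm y)\<^sup>2 / 4)"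
          using sq c by simp
      qed (use h c in auto)
      also have "\<dots> = w y"
      proof -
        have "exp ((\<alpha> + 1/2) * norm y - (norm y)\<^sup>2 / 4) = exp (\<alpha> * norm y) * exp (1/2 * norm y - (norm y)\<^sup>2 / 4)"
          by (simp add: exp_add[symmetric] algebra_simps)
        then show ?thesis unfolding w_def by (simp add: mult_ac)
      qed
      finally show ?thesis unfolding z_def .
    qed
  qed
  moreover have "integral\<^sup>L lborel h = integral\<^sup>L lborel (\<lambda>y. pdx p i y t * G1 y) - integral\<^sup>L lborel (\<lambda>y. p y t * (y $ i / 2) * G1 y)"
  proof -
    have "h = (\<lambda>y. pdx p i y t * G1 y - p y t * (y $ i / 2) * G1 y)" unfolding h_def[abs_def] by (simp add: algebra_simps)
    then show ?thesis
      using Bochner_Integration.integral_diff[OF integrable_pfG[OF pf_pdx[OF pP]] integrable_pfG[OF q1P]] by simp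
  qed
  ultimately show ?thesis by simp
qed

lemma heatG_scale: fixes y :: "real^'n" assumes r: "r > 0"
  shows "r ^ CARD('n) * heatG (r *\<^sub>R y) (-(r\<^sup>2)) = G1 y"
proof -
  define n where "n = real CARD('n)"
  have a: "(4 * pi * r\<^sup>2) powr (- n / 2) = (4 * pi) powr (- n / 2) * (r\<^sup>2) powr (- n / 2)"
    using r by (simp add: powr_mult)
  have r2: "r\<^sup>2 = r powr 2" using powr_realpow[OF r, of 2] by simp
  have b: "(r\<^sup>2) powr (- n / 2) = r powr (- n)" unfolding r2 powr_powr by simp
  have rn: "r ^ CARD('n) = r powr n" using powr_realpow[OF r, of "CARD('n)"] r by (simp add: n_def)
  have c: "r ^ CARD('n) * r powr (- n) = 1"
    unfolding rn using r by (simp add: powr_add[symmetric])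
  have d: "exp (- (norm (r *\<^sub>R y))\<^sup>2 / (4 * r\<^sup>2)) = exp (- (norm y)\<^sup>2 / 4)"
    using r by (simp add: power_mult_distrib field_simps)
  show ?thesis
    unfolding heatG_def G1_eq minus_minus d
    using a b c by (simp add: n_def mult_ac)
qed

lemma scale_int:
  fixes F :: "real^'n \<Rightarrow> real"
  assumes Fm[measurable]: "F \<in> borel_measurable borel" and r: "r > 0"
  shows "integral\<^sup>L lborel (\<lambda>x. F x * heatG x (-(r\<^sup>2))) = integral\<^sup>L lborel (\<lambda>y. F (r *\<^sub>R y) * G1 y)"
proof -
  have hm[measurable]: "(\<lambda>x::real^'n. heatG x t) \<in> borel_measurable borel" for t
    unfolding heatG_def by simp
  have "integral\<^sup>L lborel (\<lambda>x. F x * heatG x (-(r\<^sup>2))) =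
      integral\<^sup>L (density (distr lborel borel (\<lambda>x. 0 + r *\<^sub>R x)) (\<lambda>_. \<bar>r\<bar> ^ DIM(real^'n))) (\<lambda>x. F x * heatG x (-(r\<^sup>2)))"
    using lborel_affine[of r "0::real^'n"] r by simp
  also have "\<dots> = integral\<^sup>L (distr lborel borel (\<lambda>x. 0 + r *\<^sub>R x)) (\<lambda>x. \<bar>r\<bar> ^ DIM(real^'n) *\<^sub>R (F x * heatG x (-(r\<^sup>2))))"
    by (rule integral_density) auto
  also have "\<dots> = integral\<^sup>L lborel (\<lambda>y. \<bar>r\<bar> ^ DIM(real^'n) *\<^sub>R (F (0 + r *\<^sub>R y) * heatG (0 + r *\<^sub>R y) (-(r\<^sup>2))))"
    by (rule integral_distr) auto
  also have "\<dots> = integral\<^sup>L lborel (\<lambda>y. F (r *\<^sub>R y) * G1 y)"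
  proof -
    have "(\<lambda>y. \<bar>r\<bar> ^ DIM(real^'n) *\<^sub>R (F (0 + r *\<^sub>R y) * heatG (0 + r *\<^sub>R y) (-(r\<^sup>2)))) = (\<lambda>y. F (r *\<^sub>R y) * G1 y)"
    proof
      fix y
      show "\<bar>r\<bar> ^ DIM(real^'n) *\<^sub>R (F (0 + r *\<^sub>R y) * heatG (0 + r *\<^sub>R y) (-(r\<^sup>2))) = F (r *\<^sub>R y) * G1 y"
        using heatG_scale[OF r, of y] r by (simp add: mult_ac)
    qed
    then show ?thesis by (rule arg_cong)
  qed
  finally show ?thesis .
qed


lemma rep_E2:
  fixes u :: "real^'n \<Rightarrow> real \<Rightarrow> real"
  assumes uP: "u \<in> poly_fun" and r: "rep u D Q"
  shows "a * pdx u i (a *\<^sub>R y) (-(a\<^sup>2)) = (\<Sum>k\<le>D. pdx (Q k) i y t * a ^ k)"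
proof -
  have chu: "chainp u" by (rule pf_chainp[OF uP])
  have QP: "Q k \<in> poly_fun" for k using r unfolding rep_def by simp
  have chQ: "chainp (Q k)" for k by (rule pf_chainp[OF QP])
  have Vrep: "(\<lambda>y t. u (a *\<^sub>R y) (-(a\<^sup>2))) = (\<lambda>y t. \<Sum>k\<le>D. Q k y t * a ^ k)"
    using r unfolding rep_def by auto
  have "pdx (\<lambda>y t. u (a *\<^sub>R y) (-(a\<^sup>2))) i y t = a * pdx u i (a *\<^sub>R y) (-(a\<^sup>2))"
    using pdx_scale[OF chu] by simp
  moreover have "pdx (\<lambda>y t. u (a *\<^sub>R y) (-(a\<^sup>2))) i y t = (\<Sum>k\<le>D. pdx (Q k) i y t * a ^ k)"
    unfolding Vrep by (subst pdx_lin) (auto intro: chQ)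
  ultimately show ?thesis by simp
qed

lemma pfI: "p \<in> poly_fun \<Longrightarrow> integrable lborel (\<lambda>y. p y 0 * G1 y)"
  by (rule integrable_pfG)

definition AA :: "(nat \<Rightarrow> real^'n \<Rightarrow> real \<Rightarrow> real) \<Rightarrow> nat \<Rightarrow> nat \<Rightarrow> real" where
  "AA Q j k = integral\<^sup>L lborel (\<lambda>y. Q j y 0 * Q k y 0 * G1 y)"

definition BB :: "(nat \<Rightarrow> real^'n \<Rightarrow> real \<Rightarrow> real) \<Rightarrow> nat \<Rightarrow> nat \<Rightarrow> real" where
  "BB Q j k = integral\<^sup>L lborel (\<lambda>y. (\<Sum>i\<in>UNIV. pdx (Q j) i y 0 * pdx (Q k) i y 0) * G1 y)"

lemma ortho_rel:
  fixes u :: "real^'n \<Rightarrow> real \<Rightarrow> real"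
  assumes cal: "caloric_poly u" and r: "rep u D Q"
  shows "2 * BB Q j k = real k * AA Q j k"
proof -
  have QP: "Q k \<in> poly_fun" for k using r unfolding rep_def by simp
  have chQ: "chainp (Q k)" for k by (rule pf_chainp[OF QP])
  have chQ2: "chainp (pdx (Q k) i)" for k i by (rule pf_chainp[OF pf_pdx[OF QP]])
  define X where "X = integral\<^sup>L lborel (\<lambda>y. Q j y 0 * laplacian (Q k) y 0 * G1 y)"
  define R where "R = integral\<^sup>L lborel (\<lambda>y. Q j y 0 * rad (Q k) y 0 * G1 y)"
  have Ii: "integral\<^sup>L lborel (\<lambda>y. (pdx (Q j) i y 0 * pdx (Q k) i y 0 + Q j y 0 * pdx (pdx (Q k) i) i y 0) * G1 y)
      = integral\<^sup>L lborel (\<lambda>y. Q j y 0 * (y $ i * pdx (Q k) i y 0) * G1 y) / 2" for i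
  proof -
    have "(\<lambda>y t. Q j y t * pdx (Q k) i y t) \<in> poly_fun"
      by (intro poly_fun.pf_mult QP pf_pdx)
    from ibp_pf[OF this, of i 0]
    have "integral\<^sup>L lborel (\<lambda>y. pdx (\<lambda>y t. Q j y t * pdx (Q k) i y t) i y 0 * G1 y) =
          integral\<^sup>L lborel (\<lambda>y. Q j y 0 * pdx (Q k) i y 0 * (y $ i / 2) * G1 y)" .
    moreover have "pdx (\<lambda>y t. Q j y t * pdx (Q k) i y t) i = (\<lambda>y t. pdx (Q j) i y t * pdx (Q k) i y t + Q j y t * pdx (pdx (Q k) i) i y t)"
      by (rule pdx_mult[OF chQ chQ2])
    moreover have "(\<lambda>y. Q j y 0 * pdx (Q k) i y 0 * (y $ i / 2) * G1 y) = (\<lambda>y. Q j y 0 * (y $ i * pdx (Q k) i y 0) * G1 y / 2)"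
      by (simp add: fun_eq_iff field_simps)
    ultimately have "integral\<^sup>L lborel (\<lambda>y. (pdx (Q j) i y 0 * pdx (Q k) i y 0 + Q j y 0 * pdx (pdx (Q k) i) i y 0) * G1 y)
       = integral\<^sup>L lborel (\<lambda>y. Q j y 0 * (y $ i * pdx (Q k) i y 0) * G1 y / 2)"
      by (simp only:)
    then show ?thesis by (simp only: integral_divide_zero)
  qed
  have int1: "integrable lborel (\<lambda>y. (pdx (Q j) i y 0 * pdx (Q k) i y 0 + Q j y 0 * pdx (pdx (Q k) i) i y 0) * G1 y)" for i
    by (rule pfI[where p="\<lambda>y t. pdx (Q j) i y t * pdx (Q k) i y t + Q j y t * pdx (pdx (Q k) i) i y t"])
       (intro poly_fun.pf_mult poly_fun.pf_add QP pf_pdx)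
  have int2: "integrable lborel (\<lambda>y. Q j y 0 * (y $ i * pdx (Q k) i y 0) * G1 y)" for i
    by (rule pfI[where p="\<lambda>y t. Q j y t * (y $ i * pdx (Q k) i y t)"])
       (intro poly_fun.pf_mult poly_fun.pf_coord QP pf_pdx)
  have intB: "integrable lborel (\<lambda>y. (\<Sum>i\<in>UNIV. pdx (Q j) i y 0 * pdx (Q k) i y 0) * G1 y)"
    by (rule pfI[where p="\<lambda>y t. \<Sum>i\<in>UNIV. pdx (Q j) i y t * pdx (Q k) i y t"])
       (intro pf_sum ballI finite poly_fun.pf_mult QP pf_pdx)
  have intX: "integrable lborel (\<lambda>y. Q j y 0 * laplacian (Q k) y 0 * G1 y)"
    unfolding laplacian_def
    by (rule pfI[where p="\<lambda>y t. Q j y t * (\<Sum>i\<in>UNIV. pdx (pdx (Q k) i) i y t)"])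
       (intro pf_sum ballI finite poly_fun.pf_mult QP pf_pdx)
  have intA: "integrable lborel (\<lambda>y. Q j y 0 * Q k y 0 * G1 y)"
    by (rule pfI[where p="\<lambda>y t. Q j y t * Q k y t"]) (intro poly_fun.pf_mult QP)
  have "BB Q j k + X = (\<Sum>i\<in>UNIV. integral\<^sup>L lborel (\<lambda>y. (pdx (Q j) i y 0 * pdx (Q k) i y 0 + Q j y 0 * pdx (pdx (Q k) i) i y 0) * G1 y))"
  proof -
    have "(\<Sum>i\<in>UNIV. integral\<^sup>L lborel (\<lambda>y. (pdx (Q j) i y 0 * pdx (Q k) i y 0 + Q j y 0 * pdx (pdx (Q k) i) i y 0) * G1 y))
        = integral\<^sup>L lborel (\<lambda>y. \<Sum>i\<in>UNIV. (pdx (Q j) i y 0 * pdx (Q k) i y 0 + Q j y 0 * pdx (pdx (Q k) i) i y 0) * G1 y)"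
      by (rule Bochner_Integration.integral_sum[symmetric]) (rule int1)
    also have "\<dots> = integral\<^sup>L lborel (\<lambda>y. (\<Sum>i\<in>UNIV. pdx (Q j) i y 0 * pdx (Q k) i y 0) * G1 y + Q j y 0 * laplacian (Q k) y 0 * G1 y)"
      by (simp add: laplacian_def sum_distrib_left sum_distrib_right sum.distrib algebra_simps)
    also have "\<dots> = BB Q j k + X"
      unfolding BB_def X_def by (rule Bochner_Integration.integral_add[OF intB intX])
    finally show ?thesis by simp
  qed
  also have "\<dots> = (\<Sum>i\<in>UNIV. integral\<^sup>L lborel (\<lambda>y. Q j y 0 * (y $ i * pdx (Q k) i y 0) * G1 y)) / 2"
    by (simp add: Ii sum_divide_distrib)
  also have "\<dots> = R / 2"
  proof -
    have "(\<Sum>i\<in>UNIV. integral\<^sup>L lborel (\<lambda>y. Q j y 0 * (y $ i * pdx (Q k) i y 0) * G1 y)) =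
        integral\<^sup>L lborel (\<lambda>y. \<Sum>i\<in>UNIV. Q j y 0 * (y $ i * pdx (Q k) i y 0) * G1 y)"
      by (rule Bochner_Integration.integral_sum[symmetric]) (rule int2)
    also have "\<dots> = R" unfolding R_def rad_def
      by (simp add: sum_distrib_left sum_distrib_right)
    finally show ?thesis by simp
  qed
  finally have e1: "2 * BB Q j k + 2 * X = R" by simp
  have "R = integral\<^sup>L lborel (\<lambda>y. real k * (Q j y 0 * Q k y 0 * G1 y) + 2 * (Q j y 0 * laplacian (Q k) y 0 * G1 y))"
  proof -
    have "rad (Q k) y 0 = real k * Q k y 0 + 2 * laplacian (Q k) y 0" for y
      using eigen[OF cal r, of k y 0] by simp
    then show ?thesis unfolding R_def by (simp add: algebra_simps)
  qed
  also have "\<dots> = real k * AA Q j k + 2 * X"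
    unfolding AA_def X_def
    using intA intX by simp
  finally show ?thesis using e1 by simp
qed

lemma AA_sym: "AA Q j k = AA Q k j" unfolding AA_def by (simp add: mult_ac)
lemma BB_sym: "BB Q j k = BB Q k j" unfolding BB_def by (simp add: mult_ac)

lemma ortho:
  fixes u :: "real^'n \<Rightarrow> real \<Rightarrow> real"
  assumes cal: "caloric_poly u" and r: "rep u D Q" and jk: "j \<noteq> k"
  shows "AA Q j k = 0" "BB Q j k = 0"
proof -
  have e1: "2 * BB Q j k = real k * AA Q j k" by (rule ortho_rel[OF cal r])
  have e2: "2 * BB Q j k = real j * AA Q j k"
    using ortho_rel[OF cal r, of k j] unfolding AA_sym[of Q k j] BB_sym[of Q k j] .
  have "real k * AA Q j k = real j * AA Q j k" using e1 e2 by linarith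
  then have "(real k - real j) * AA Q j k = 0" by (simp only: left_diff_distrib)
  moreover have "real k - real j \<noteq> 0" using jk by simp
  ultimately show A: "AA Q j k = 0" by simp
  then show "BB Q j k = 0" using ortho_rel[OF cal r, of j k] by simp
qed

lemma AA_nonneg: "AA Q k k \<ge> 0"
  unfolding AA_def
  by (rule Bochner_Integration.integral_nonneg, rule mult_nonneg_nonneg, simp, rule less_imp_le, rule G1_pos)

lemma dsum_diag: fixes c :: "nat \<Rightarrow> nat \<Rightarrow> real"
  assumes "\<And>j k. j \<noteq> k \<Longrightarrow> c j k = 0"
  shows "(\<Sum>j\<le>D. \<Sum>k\<le>D. c j k) = (\<Sum>j\<le>D. c j j)"
proof (rule sum.cong)
  fix j assume "j \<in> {..D}"
  have "(\<Sum>k\<le>D. c j k) = (\<Sum>k\<le>D. if j = k then c j j else 0)"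
    by (rule sum.cong) (auto simp: assms)
  also have "\<dots> = c j j" using \<open>j \<in> {..D}\<close> by simp
  finally show "(\<Sum>k\<le>D. c j k) = c j j" .
qed simp

lemma sq_sum: "(\<Sum>j\<le>D. a j * r ^ j) * (\<Sum>k\<le>D. b k * r ^ k) * (g::real) = (\<Sum>j\<le>D. \<Sum>k\<le>D. r ^ (j + k) * (a j * b k * g))"
proof -
  have "(\<Sum>j\<le>D. a j * r ^ j) * (\<Sum>k\<le>D. b k * r ^ k) = (\<Sum>j\<le>D. \<Sum>k\<le>D. (a j * r ^ j) * (b k * r ^ k))"
    by (rule sum_product)
  then have "(\<Sum>j\<le>D. a j * r ^ j) * (\<Sum>k\<le>D. b k * r ^ k) * g = (\<Sum>j\<le>D. \<Sum>k\<le>D. (a j * r ^ j) * (b k * r ^ k) * g)"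
    by (simp add: sum_distrib_right)
  then show ?thesis by (simp add: power_add mult_ac)
qed

lemma freq_formula:
  fixes u :: "real^'n \<Rightarrow> real \<Rightarrow> real"
  assumes cal: "caloric_poly u" and rp: "rep u D Q" and r: "r > 0"
  shows "freq u r = (\<Sum>k\<le>D. real k * AA Q k k * r ^ (2 * k)) / (\<Sum>k\<le>D. AA Q k k * r ^ (2 * k))"
proof -
  have uP: "u \<in> poly_fun" using cal unfolding caloric_poly_def by simp
  have QP: "Q k \<in> poly_fun" for k using rp unfolding rep_def by simp
  have urep: "u (r *\<^sub>R y) (-(r\<^sup>2)) = (\<Sum>k\<le>D. Q k y 0 * r ^ k)" for y
    using rp unfolding rep_def by blast
  have intA: "integrable lborel (\<lambda>y. Q j y 0 * Q k y 0 * G1 y)" for j k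
    by (rule pfI[where p="\<lambda>y t. Q j y t * Q k y t"]) (intro poly_fun.pf_mult QP)
  have intB: "integrable lborel (\<lambda>y. (\<Sum>i\<in>UNIV. pdx (Q j) i y 0 * pdx (Q k) i y 0) * G1 y)" for j k
    by (rule pfI[where p="\<lambda>y t. \<Sum>i\<in>UNIV. pdx (Q j) i y t * pdx (Q k) i y t"])
       (intro pf_sum ballI finite poly_fun.pf_mult QP pf_pdx)
  have den: "integral\<^sup>L lborel (\<lambda>x. (u x (-(r\<^sup>2)))\<^sup>2 * heatG x (-(r\<^sup>2))) = (\<Sum>k\<le>D. AA Q k k * r ^ (2 * k))"
  proof -
    have "integral\<^sup>L lborel (\<lambda>x. (u x (-(r\<^sup>2)))\<^sup>2 * heatG x (-(r\<^sup>2))) =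
        integral\<^sup>L lborel (\<lambda>y. (u (r *\<^sub>R y) (-(r\<^sup>2)))\<^sup>2 * G1 y)"
      by (rule scale_int[OF _ r]) (intro borel_measurable_power pf_meas[OF uP])
    also have "\<dots> = integral\<^sup>L lborel (\<lambda>y. \<Sum>j\<le>D. \<Sum>k\<le>D. r ^ (j + k) * (Q j y 0 * Q k y 0 * G1 y))"
    proof -
      have "(u (r *\<^sub>R y) (-(r\<^sup>2)))\<^sup>2 * G1 y = (\<Sum>j\<le>D. \<Sum>k\<le>D. r ^ (j + k) * (Q j y 0 * Q k y 0 * G1 y))" for y
        unfolding urep power2_eq_square[of "\<Sum>k\<le>D. Q k y 0 * r ^ k"] by (rule sq_sum)
      then show ?thesis by simp
    qed
    also have "\<dots> = (\<Sum>j\<le>D. \<Sum>k\<le>D. r ^ (j + k) * AA Q j k)"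
      unfolding AA_def
      by (subst Bochner_Integration.integral_sum, simp add: intA,
          intro sum.cong refl, subst Bochner_Integration.integral_sum, simp add: intA, simp)
    also have "\<dots> = (\<Sum>j\<le>D. r ^ (j + j) * AA Q j j)"
      by (rule dsum_diag) (simp add: ortho[OF cal rp])
    also have "\<dots> = (\<Sum>k\<le>D. AA Q k k * r ^ (2 * k))"
      by (intro sum.cong refl) (simp add: mult_2[symmetric] mult.commute)
    finally show ?thesis .
  qed
  have num: "2 * r\<^sup>2 * integral\<^sup>L lborel (\<lambda>x. grad_sq u x (-(r\<^sup>2)) * heatG x (-(r\<^sup>2))) = (\<Sum>k\<le>D. real k * AA Q k k * r ^ (2 * k))"
  proof -
    have gm: "(\<lambda>x. grad_sq u x (-(r\<^sup>2))) \<in> borel_measurable borel"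
      unfolding grad_sq_def by (intro borel_measurable_sum borel_measurable_power pf_meas[OF pf_pdx[OF uP]])
    have "2 * r\<^sup>2 * integral\<^sup>L lborel (\<lambda>x. grad_sq u x (-(r\<^sup>2)) * heatG x (-(r\<^sup>2))) =
        2 * integral\<^sup>L lborel (\<lambda>y. r\<^sup>2 * (grad_sq u (r *\<^sub>R y) (-(r\<^sup>2)) * G1 y))"
      by (simp add: scale_int[OF gm r])
    also have "\<dots> = 2 * integral\<^sup>L lborel (\<lambda>y. \<Sum>j\<le>D. \<Sum>k\<le>D. r ^ (j + k) * ((\<Sum>i\<in>UNIV. pdx (Q j) i y 0 * pdx (Q k) i y 0) * G1 y))"
    proof -
      have "r\<^sup>2 * (grad_sq u (r *\<^sub>R y) (-(r\<^sup>2)) * G1 y) = (\<Sum>j\<le>D. \<Sum>k\<le>D. r ^ (j + k) * ((\<Sum>i\<in>UNIV. pdx (Q j) i y 0 * pdx (Q k) i y 0) * G1 y))" for y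
      proof -
        have "r\<^sup>2 * grad_sq u (r *\<^sub>R y) (-(r\<^sup>2)) = (\<Sum>i\<in>UNIV. (r * pdx u i (r *\<^sub>R y) (-(r\<^sup>2)))\<^sup>2)"
          unfolding grad_sq_def by (simp add: sum_distrib_left power_mult_distrib)
        also have "\<dots> = (\<Sum>i\<in>UNIV. (\<Sum>k\<le>D. pdx (Q k) i y 0 * r ^ k)\<^sup>2)"
          by (simp add: rep_E2[OF uP rp, where t=0])
        also have "\<dots> = (\<Sum>i\<in>UNIV. \<Sum>j\<le>D. \<Sum>k\<le>D. r ^ (j + k) * (pdx (Q j) i y 0 * pdx (Q k) i y 0))"
          unfolding power2_eq_square sum_product
          by (intro sum.cong refl) (simp add: power_add mult_ac)
        also have "\<dots> = (\<Sum>j\<le>D. \<Sum>k\<le>D. r ^ (j + k) * (\<Sum>i\<in>UNIV. pdx (Q j) i y 0 * pdx (Q k) i y 0))"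
          by (simp add: sum_distrib_left sum.swap[of _ UNIV])
        finally have eq: "r\<^sup>2 * grad_sq u (r *\<^sub>R y) (-(r\<^sup>2)) = (\<Sum>j\<le>D. \<Sum>k\<le>D. r ^ (j + k) * (\<Sum>i\<in>UNIV. pdx (Q j) i y 0 * pdx (Q k) i y 0))" .
        have "r\<^sup>2 * (grad_sq u (r *\<^sub>R y) (-(r\<^sup>2)) * G1 y) = (\<Sum>j\<le>D. \<Sum>k\<le>D. r ^ (j + k) * (\<Sum>i\<in>UNIV. pdx (Q j) i y 0 * pdx (Q k) i y 0)) * G1 y"
          by (simp only: mult.assoc[symmetric] eq)
        also have "\<dots> = (\<Sum>j\<le>D. \<Sum>k\<le>D. r ^ (j + k) * ((\<Sum>i\<in>UNIV. pdx (Q j) i y 0 * pdx (Q k) i y 0) * G1 y))"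
          by (simp add: sum_distrib_right mult.assoc)
        finally show ?thesis .
      qed
      then show ?thesis by simp
    qed
    also have "\<dots> = 2 * (\<Sum>j\<le>D. \<Sum>k\<le>D. r ^ (j + k) * BB Q j k)"
      unfolding BB_def
      by (subst Bochner_Integration.integral_sum, simp add: intB,
          intro arg_cong[where f="\<lambda>x. 2 * x"] sum.cong refl, subst Bochner_Integration.integral_sum, simp add: intB, simp)
    also have "\<dots> = 2 * (\<Sum>j\<le>D. r ^ (j + j) * BB Q j j)"
      by (subst dsum_diag) (simp_all add: ortho[OF cal rp])
    also have "\<dots> = (\<Sum>j\<le>D. real j * AA Q j j * r ^ (2 * j))"
      unfolding sum_distrib_left
    proof (intro sum.cong refl)
      fix j
      have e: "2 * BB Q j j = real j * AA Q j j" by (rule ortho_rel[OF cal rp])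
      have p: "r ^ (j + j) = r ^ (2 * j)" by (simp only: mult_2)
      have "2 * (r ^ (j + j) * BB Q j j) = r ^ (2 * j) * (2 * BB Q j j)"
        unfolding p by (simp only: ac_simps)
      also have "\<dots> = real j * AA Q j j * r ^ (2 * j)" unfolding e by simp
      finally show "2 * (r ^ (j + j) * BB Q j j) = real j * AA Q j j * r ^ (2 * j)" .
    qed
    finally show ?thesis .
  qed
  show ?thesis unfolding freq_def using den num by simp
qed


lemma final_ineq:
  fixes a :: "nat \<Rightarrow> real" and \<Lambda> \<epsilon> \<delta> :: real and d :: int
  assumes a0: "\<And>k. a k \<ge> 0" and L0: "\<Lambda> > 0" and e0: "\<epsilon> > 0" and d0: "0 < \<delta>" and d1: "\<delta> \<le> 1"
    and dsmall: "\<delta>\<^sup>2 * \<Lambda> \<le> \<epsilon> * min (\<epsilon> / (2 * \<Lambda>)) (1/2)"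
    and N1L: "(\<Sum>k\<le>D. real k * a k) / (\<Sum>k\<le>D. a k) \<le> \<Lambda>"
    and N1d: "(\<Sum>k\<le>D. real k * a k) / (\<Sum>k\<le>D. a k) \<le> real_of_int d - \<epsilon>"
  shows "(\<Sum>k\<le>D. real k * a k * \<delta> ^ (2 * k)) / (\<Sum>k\<le>D. a k * \<delta> ^ (2 * k)) \<le> real_of_int d - 1 + \<epsilon>"
proof -
  define S1 where "S1 = (\<Sum>k\<le>D. a k)"
  define T1 where "T1 = (\<Sum>k\<le>D. real k * a k)"
  define S where "S = (\<Sum>k\<le>D. a k * \<delta> ^ (2 * k))"
  define T where "T = (\<Sum>k\<le>D. real k * a k * \<delta> ^ (2 * k))"
  have S1nn: "S1 \<ge> 0" unfolding S1_def by (intro sum_nonneg) (use a0 in auto)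
  have T1nn: "T1 \<ge> 0" unfolding T1_def by (intro sum_nonneg) (use a0 in auto)
  have Snn: "S \<ge> 0" unfolding S_def using d0 by (intro sum_nonneg mult_nonneg_nonneg) (use a0 in auto)
  have "T1 / S1 \<ge> 0" using S1nn T1nn by simp
  then have dpos: "real_of_int d \<ge> \<epsilon>" using N1d unfolding S1_def T1_def by linarith
  then have dge1: "d \<ge> 1" using e0 by (metis int_one_le_iff_zero_less less_le_trans of_int_0_less_iff)
  define dn where "dn = nat d"
  have ddn: "real_of_int d = real dn" and dn1: "dn \<ge> 1" using dge1 unfolding dn_def by auto
  show ?thesis
  proof (cases "S1 = 0")
    case True
    then have "\<forall>k\<in>{..D}. a k = 0" using a0 unfolding S1_def by (subst (asm) sum_nonneg_eq_0_iff) auto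
    then have "S = 0" unfolding S_def by simp
    then show ?thesis using dge1 e0 unfolding S_def[symmetric] by simp
  next
    case False
    then have S1p: "S1 > 0" using S1nn by simp
    have T1L: "T1 \<le> \<Lambda> * S1" using N1L S1p unfolding S1_def[symmetric] T1_def[symmetric] by (simp add: divide_le_eq)
    have T1d: "T1 \<le> (real dn - \<epsilon>) * S1" using N1d S1p ddn unfolding S1_def[symmetric] T1_def[symmetric] by (simp add: divide_le_eq)
    define L where "L = (\<Sum>k\<le>D. if k < dn then a k else 0)"
    define H where "H = (\<Sum>k\<le>D. if k < dn then 0 else a k)"
    define TH where "TH = (\<Sum>k\<le>D. if k < dn then 0 else real k * a k)"
    have SLH: "S1 = L + H" unfolding S1_def L_def H_def sum.distrib[symmetric] by (intro sum.cong) auto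
    have THT1: "TH \<le> T1" unfolding TH_def T1_def by (intro sum_mono) (use a0 in auto)
    have HTH: "real dn * H \<le> TH" unfolding TH_def H_def sum_distrib_left
      by (intro sum_mono) (use a0 in \<open>auto intro: mult_right_mono\<close>)
    define m where "m = min (\<epsilon> / (2 * \<Lambda>)) (1/2)"
    have Lm: "L \<ge> m * S1"
    proof (cases "real dn \<le> 2 * \<Lambda>")
      case True
      have "real dn * (S1 - L) \<le> (real dn - \<epsilon>) * S1" using HTH THT1 T1d SLH by simp
      then have "\<epsilon> * S1 \<le> real dn * L" by (simp add: algebra_simps)
      also have "\<dots> \<le> (2 * \<Lambda>) * L"
        using True by (intro mult_right_mono) (auto simp: L_def intro!: sum_nonneg a0)
      finally have "\<epsilon> / (2 * \<Lambda>) * S1 \<le> L" using L0 by (simp add: field_simps)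
      moreover have "m * S1 \<le> \<epsilon> / (2 * \<Lambda>) * S1" unfolding m_def using S1nn by (intro mult_right_mono) auto
      ultimately show ?thesis by linarith
    next
      case False
      have "real dn * H \<le> \<Lambda> * S1" using HTH THT1 T1L by linarith
      moreover have "\<Lambda> * S1 \<le> (real dn / 2) * S1" using False S1nn by (intro mult_right_mono) auto
      ultimately have "real dn * H \<le> real dn * (S1 / 2)" by simp
      then have "H \<le> S1 / 2" using dn1 by simp
      then have "1/2 * S1 \<le> L" using SLH by simp
      moreover have "m * S1 \<le> 1/2 * S1" unfolding m_def using S1nn by (intro mult_right_mono) auto
      ultimately show ?thesis by linarith
    qed
    define q where "q = \<delta> ^ (2 * (dn - 1))"
    have q0: "q \<ge> 0" unfolding q_def using d0 by simp
    have qd: "\<delta> ^ (2 * dn) = q * \<delta>\<^sup>2"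
    proof -
      have e: "2 * dn = 2 * (dn - 1) + 2" using dn1 by simp
      show ?thesis unfolding q_def by (subst e) (simp only: power_add)
    qed
    have trm: "(real k - (real dn - 1 + \<epsilon>)) * (a k * \<delta> ^ (2 * k)) \<le>
        (if k < dn then - \<epsilon> * q * a k else \<delta> ^ (2 * dn) * (real k * a k))" for k
    proof (cases "k < dn")
      case True
      have "real k \<le> real dn - 1" using True by linarith
      then have c: "real k - (real dn - 1 + \<epsilon>) \<le> - \<epsilon>" by simp
      have pq: "q \<le> \<delta> ^ (2 * k)" unfolding q_def using True d0 d1
        by (intro power_decreasing) auto
      have "(real k - (real dn - 1 + \<epsilon>)) * (a k * \<delta> ^ (2 * k)) \<le> - \<epsilon> * (a k * \<delta> ^ (2 * k))"
        using c a0[of k] d0 by (intro mult_right_mono) auto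
      also have "\<dots> \<le> - \<epsilon> * (a k * q)"
        using pq e0 a0[of k] by (simp add: mult_left_mono)
      finally show ?thesis using True by (simp add: mult_ac)
    next
      case False
      have c: "real k - (real dn - 1 + \<epsilon>) \<le> real k" using dn1 e0 by simp
      have pq: "\<delta> ^ (2 * k) \<le> \<delta> ^ (2 * dn)" using False d0 d1
        by (intro power_decreasing) auto
      have "(real k - (real dn - 1 + \<epsilon>)) * (a k * \<delta> ^ (2 * k)) \<le> real k * (a k * \<delta> ^ (2 * k))"
        using c a0[of k] d0 by (intro mult_right_mono) auto
      also have "\<dots> \<le> real k * (a k * \<delta> ^ (2 * dn))"
        using pq a0[of k] by (intro mult_left_mono) auto
      finally show ?thesis using False by (simp add: mult_ac)
    qed
    have "T - (real dn - 1 + \<epsilon>) * S = (\<Sum>k\<le>D. (real k - (real dn - 1 + \<epsilon>)) * (a k * \<delta> ^ (2 * k)))"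
      unfolding T_def S_def sum_distrib_left sum_subtractf[symmetric]
      by (intro sum.cong) (auto simp: algebra_simps)
    also have "\<dots> \<le> (\<Sum>k\<le>D. if k < dn then - \<epsilon> * q * a k else \<delta> ^ (2 * dn) * (real k * a k))"
      by (intro sum_mono trm)
    also have "\<dots> = - \<epsilon> * q * L + \<delta> ^ (2 * dn) * TH"
      unfolding L_def TH_def sum_distrib_left sum.distrib[symmetric]
      by (intro sum.cong) auto
    also have "\<dots> \<le> 0"
    proof -
      have "\<delta> ^ (2 * dn) * TH \<le> q * (\<delta>\<^sup>2 * (\<Lambda> * S1))"
        unfolding qd using THT1 T1L q0 by (simp add: mult_left_mono mult.assoc)
      also have "\<dots> \<le> q * (\<epsilon> * m * S1)"
      proof -
        have "\<delta>\<^sup>2 * \<Lambda> * S1 \<le> \<epsilon> * m * S1" using dsmall S1nn unfolding m_def by (intro mult_right_mono) auto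
        then show ?thesis using q0 by (intro mult_left_mono) (auto simp: mult.assoc)
      qed
      also have "\<dots> \<le> q * (\<epsilon> * L)"
        using Lm q0 e0 by (intro mult_left_mono) (auto simp: mult.assoc)
      finally show ?thesis by (simp add: algebra_simps)
    qed
    finally have TS: "T \<le> (real dn - 1 + \<epsilon>) * S" by simp
    show ?thesis
    proof (cases "S = 0")
      case True then show ?thesis using ddn dn1 e0 unfolding S_def[symmetric] by simp
    next
      case False
      then have "S > 0" using Snn by simp
      then show ?thesis using TS ddn unfolding S_def[symmetric] T_def[symmetric] by (simp add: divide_le_eq)
    qed
  qed
qed

theorem lemma2p5:
  fixes \<Lambda> \<epsilon> :: real
  assumes "\<Lambda> > 0" and "\<epsilon> > 0"
  shows "\<exists>\<delta>>0. \<forall>(u :: real^'n \<Rightarrow> real \<Rightarrow> real) (d :: int).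
           caloric_poly u \<and> u \<noteq> (\<lambda>x t. 0) \<and> freq u 1 \<le> \<Lambda> \<and> freq u 1 \<le> real_of_int d - \<epsilon>
           \<longrightarrow> freq u \<delta> \<le> real_of_int d - 1 + \<epsilon>"
proof -
  define m where "m = min (\<epsilon> / (2 * \<Lambda>)) (1/2)"
  have m0: "m > 0" unfolding m_def using assms by simp
  define \<delta> where "\<delta> = sqrt (min 1 (\<epsilon> * m / \<Lambda>))"
  have d0: "\<delta> > 0" unfolding \<delta>_def using assms m0 by simp
  have d1: "\<delta> \<le> 1" unfolding \<delta>_def by simp
  have dsq: "\<delta>\<^sup>2 = min 1 (\<epsilon> * m / \<Lambda>)" unfolding \<delta>_def using assms m0 by simp
  have dsmall: "\<delta>\<^sup>2 * \<Lambda> \<le> \<epsilon> * min (\<epsilon> / (2 * \<Lambda>)) (1/2)"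
  proof -
    have "\<delta>\<^sup>2 \<le> \<epsilon> * m / \<Lambda>" unfolding dsq by simp
    then have "\<delta>\<^sup>2 * \<Lambda> \<le> \<epsilon> * m / \<Lambda> * \<Lambda>" using assms by (intro mult_right_mono) auto
    then show ?thesis using assms unfolding m_def by simp
  qed
  have "\<forall>(u :: real^'n \<Rightarrow> real \<Rightarrow> real) (d :: int).
           caloric_poly u \<and> u \<noteq> (\<lambda>x t. 0) \<and> freq u 1 \<le> \<Lambda> \<and> freq u 1 \<le> real_of_int d - \<epsilon>
           \<longrightarrow> freq u \<delta> \<le> real_of_int d - 1 + \<epsilon>"
  proof (intro allI impI)
    fix u :: "real^'n \<Rightarrow> real \<Rightarrow> real" and d :: int
    assume h: "caloric_poly u \<and> u \<noteq> (\<lambda>x t. 0) \<and> freq u 1 \<le> \<Lambda> \<and> freq u 1 \<le> real_of_int d - \<epsilon>"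
    then have cal: "caloric_poly u" by simp
    then have "u \<in> poly_fun" unfolding caloric_poly_def by simp
    then obtain D Q where rp: "rep u D Q" using rep_exists by blast
    have f1: "freq u 1 = (\<Sum>k\<le>D. real k * AA Q k k) / (\<Sum>k\<le>D. AA Q k k)"
      using freq_formula[OF cal rp, of 1] by simp
    have fd: "freq u \<delta> = (\<Sum>k\<le>D. real k * AA Q k k * \<delta> ^ (2 * k)) / (\<Sum>k\<le>D. AA Q k k * \<delta> ^ (2 * k))"
      by (rule freq_formula[OF cal rp d0])
    show "freq u \<delta> \<le> real_of_int d - 1 + \<epsilon>"
      unfolding fd
      by (rule final_ineq[where \<Lambda>=\<Lambda>]) (use AA_nonneg assms d0 d1 dsmall h f1 in auto)
  qed
  then show ?thesis using d0 by blast
qed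


end
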